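(* Let $\Gamma$ be a $\mathbb{D}_n$-symmetric billiard curve and let $H=\langle\rho,\sigma\rangle\subset\mathbb{D}_n$ be a dihedral subgroup of order $4$, generated by a rotation $\rho$ of order $2$ and a reflection $\sigma$. Let $z\in\Gamma^{\mathbb{Z}}$ be a billiard sequence of minimal period $p\ge3$ with spatiotemporal symmetry group $H(z)=H$. Then $p$ is even and exactly one of the following holds: - (I) $\rho(z_i)=z_{p/2+i}$ for all $i$, and $\sigma(z_i)=z_{k-i}$ for all $i$ for a unique $0\le k<p$. - (II) $\rho(z_i)=z_{k-i}$ for all $i$ for a unique odd $0<k<p$, and either $\sigma(z_i)=z_{p/2+i}$ for all $i$ or $(\rho\sigma)(z_i)=z_{p/2+i}$ for all $i$.
   Context: $\mathbb{D}_n=\langle R,S\rangle$, where $R$ is rotation by $2\pi/n$ and $S$ is the horizontal reflection. A $\mathbb{D}_n$-symmetric billiard curve is a $C^2$ simple closed $\mathbb{D}_n$-invariant curve bounding a strictly convex domain. A billiard sequence is $z\in\Gamma^{\mathbb{Z}}$ with $z_i\ne z_{i+1}$. $H(z)$ is the set of $h\in\mathbb{D}_n$ for which there is $k\in\mathbb{Z}$ with $h(z_i)=z_{k+i}$ for all $i$ or $h(z_i)=z_{k-i}$ for all $i$. *)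

theory Defs
  imports "HOL-Analysis.Analysis"
begin

text \<open>The plane is identified with the complex numbers. R is rotation by 2 pi/n,
  S is the horizontal reflection (complex conjugation). Elements of D_n are
  represented as the maps themselves.\<close>

definition rotD :: "nat \<Rightarrow> int \<Rightarrow> complex \<Rightarrow> complex" where
  "rotD n j = (\<lambda>w. cis (2 * pi * real_of_int j / real n) * w)"

definition reflD :: "nat \<Rightarrow> int \<Rightarrow> complex \<Rightarrow> complex" where
  "reflD n j = (\<lambda>w. cis (2 * pi * real_of_int j / real n) * cnj w)"

definition dihedral :: "nat \<Rightarrow> (complex \<Rightarrow> complex) set" where
  "dihedral n = range (rotD n) \<union> range (reflD n)"

definition gen_subgroup :: "(complex \<Rightarrow> complex) set \<Rightarrow> (complex \<Rightarrow> complex) set" where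
  "gen_subgroup A = \<Inter>{K. id \<in> K \<and> A \<subseteq> K \<and> (\<forall>f\<in>K. \<forall>g\<in>K. f \<circ> g \<in> K)}"

definition C2_simple_closed_curve :: "complex set \<Rightarrow> bool" where
  "C2_simple_closed_curve \<Gamma> \<longleftrightarrow>
     (\<exists>\<gamma> \<gamma>' \<gamma>''. (\<forall>t. \<gamma> (t + 1) = \<gamma> t) \<and> inj_on \<gamma> {0..<1}
        \<and> (\<forall>t. (\<gamma> has_vector_derivative \<gamma>' t) (at t))
        \<and> (\<forall>t. (\<gamma>' has_vector_derivative \<gamma>'' t) (at t))
        \<and> continuous_on UNIV \<gamma>''
        \<and> (\<forall>t. \<gamma>' t \<noteq> 0)
        \<and> \<Gamma> = \<gamma> ` {0..1})"

definition bounds_strictly_convex_domain :: "complex set \<Rightarrow> bool" where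
  "bounds_strictly_convex_domain \<Gamma> \<longleftrightarrow>
     (\<exists>\<Omega>. open \<Omega> \<and> bounded \<Omega> \<and> frontier \<Omega> = \<Gamma>
        \<and> (\<forall>x\<in>closure \<Omega>. \<forall>y\<in>closure \<Omega>. x \<noteq> y \<longrightarrow> open_segment x y \<subseteq> \<Omega>))"

definition symmetric_billiard_curve :: "nat \<Rightarrow> complex set \<Rightarrow> bool" where
  "symmetric_billiard_curve n \<Gamma> \<longleftrightarrow>
     C2_simple_closed_curve \<Gamma> \<and> bounds_strictly_convex_domain \<Gamma>
     \<and> (\<forall>g\<in>dihedral n. g ` \<Gamma> = \<Gamma>)"

definition billiard_sequence :: "complex set \<Rightarrow> (int \<Rightarrow> complex) \<Rightarrow> bool" where
  "billiard_sequence \<Gamma> z \<longleftrightarrow> (\<forall>i. z i \<in> \<Gamma> \<and> z i \<noteq> z (i + 1))"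

definition minimal_period :: "(int \<Rightarrow> complex) \<Rightarrow> int \<Rightarrow> bool" where
  "minimal_period z p \<longleftrightarrow> p > 0 \<and> (\<forall>i. z (i + p) = z i)
     \<and> (\<forall>q. 0 < q \<and> q < p \<longrightarrow> \<not> (\<forall>i. z (i + q) = z i))"

definition st_sym_group :: "nat \<Rightarrow> (int \<Rightarrow> complex) \<Rightarrow> (complex \<Rightarrow> complex) set" where
  "st_sym_group n z = {h \<in> dihedral n. \<exists>k. (\<forall>i. h (z i) = z (k + i)) \<or> (\<forall>i. h (z i) = z (k - i))}"

end

theory Submission
  imports Defs
begin


lemma seg_disj:
  assumes "bounds_strictly_convex_domain \<Gamma>" "x \<in> \<Gamma>" "y \<in> \<Gamma>" "x \<noteq> y" "w \<in> open_segment x y"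
  shows "w \<notin> \<Gamma>"
proof -
  obtain \<Omega> where o: "open \<Omega>" "frontier \<Omega> = \<Gamma>"
    "\<forall>x\<in>closure \<Omega>. \<forall>y\<in>closure \<Omega>. x \<noteq> y \<longrightarrow> open_segment x y \<subseteq> \<Omega>"
    using assms(1) unfolding bounds_strictly_convex_domain_def by blast
  have "x \<in> closure \<Omega>" "y \<in> closure \<Omega>" using assms o(2) frontier_def by auto
  then have "w \<in> \<Omega>" using o(3) assms by blast
  then show ?thesis using o(1,2) by (auto simp: frontier_def interior_open)
qed

lemma between:
  fixes u :: complex
  assumes "t1 < t2" "t2 < t3" "u \<noteq> 0"
  shows "of_real t2 * u \<in> open_segment (of_real t1 * u) (of_real t3 * u)"
proof -
  define s where "s = (t2 - t1) / (t3 - t1)"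
  have s: "0 < s" "s < 1" using assms by (auto simp: s_def field_simps)
  have "s * (t3 - t1) = t2 - t1" using assms by (simp add: s_def)
  then have e: "t2 = (1 - s) * t1 + s * t3" by (simp add: algebra_simps)
  have ne: "of_real t1 * u \<noteq> of_real t3 * u" using assms by auto
  have "of_real t2 * u = (1 - s) *\<^sub>R (of_real t1 * u) + s *\<^sub>R (of_real t3 * u)"
    by (subst e) (simp add: scaleR_conv_of_real algebra_simps)
  then show ?thesis using s ne unfolding in_segment by blast
qed

lemma no_between:
  assumes "bounds_strictly_convex_domain \<Gamma>" "u \<noteq> 0"
    "of_real t1 * u \<in> \<Gamma>" "of_real t2 * u \<in> \<Gamma>" "of_real t3 * u \<in> \<Gamma>" "t1 < t2" "t2 < t3"
  shows False
proof -
  have "of_real t1 * u \<noteq> (of_real t3 * u :: complex)" using assms by auto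
  then show False using seg_disj[OF assms(1,3,5)] between[OF assms(6,7,2)] assms(4) by blast
qed

lemma collinear3:
  fixes u :: complex
  assumes "bounds_strictly_convex_domain \<Gamma>" "u \<noteq> 0"
    "a \<in> \<Gamma>" "b \<in> \<Gamma>" "c \<in> \<Gamma>" "a \<noteq> b" "b \<noteq> c" "a \<noteq> c"
    "a = of_real ta * u" "b = of_real tb * u" "c = of_real tc * u"
  shows False
proof -
  have "ta \<noteq> tb" "tb \<noteq> tc" "ta \<noteq> tc" using assms by auto
  then show False using no_between[OF assms(1,2)] assms(3-5,9-11)
    by (metis linorder_neqE_linordered_idom)
qed

lemma fixed_real:
  fixes d w :: complex
  assumes "cmod d = 1" "d * cnj w = w"
  shows "w = of_real (Re (w / csqrt d)) * csqrt d"
proof -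
  define u where "u = csqrt d"
  have uu: "u * u = d" by (metis u_def power2_csqrt power2_eq_square)
  have nu: "cmod u = 1" using assms(1) uu by (metis norm_mult abs_norm_cancel mult_cancel_left1 norm_ge_zero abs_square_eq_1 power2_eq_square) 
  have cu: "cnj u * u = 1" using complex_norm_square[of u] nu by (simp add: mult.commute)
  have u0: "u \<noteq> 0" using nu by auto
  have "w / u = u * cnj w" using assms(2) uu u0 by (auto simp: field_simps)
  moreover have "cnj (w / u) = u * cnj w"
  proof -
    have "cnj (w/u) = cnj w / cnj u" by simp
    also have "\<dots> = cnj w * u"
    proof -
      have c0: "cnj u \<noteq> 0" using u0 by simp
      have "cnj w = cnj w * u * cnj u" using cu by (simp add: mult.commute mult.left_commute)
      then show ?thesis using c0 by (simp add: divide_eq_eq)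
    qed
    finally show ?thesis by simp
  qed
  ultimately have "w / u \<in> \<real>" by (simp add: Reals_cnj_iff)
  then have "w / u = of_real (Re (w / u))" by (simp add: complex_is_Real_iff)
  then have "w = of_real (Re (w / u)) * u" using u0 by (simp add: field_simps)
  then show ?thesis by (simp add: u_def)
qed

lemma csqrt_nz: "cmod d = 1 \<Longrightarrow> csqrt d \<noteq> 0"
  by (metis csqrt_eq_0 norm_zero zero_neq_one)



lemma per_nat:
  fixes z :: "int \<Rightarrow> 'b" and p :: int
  assumes "\<forall>i. z (i + p) = z i"
  shows "z (j + p * int m) = z j"
proof (induction m)
  case 0 then show ?case by simp
next
  case (Suc m)
  have "z (j + p * int (Suc m)) = z ((j + p * int m) + p)" by (simp add: algebra_simps)
  also have "\<dots> = z (j + p * int m)" using assms by simp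
  finally show ?case using Suc by simp
qed

lemma per_int:
  fixes z :: "int \<Rightarrow> 'b" and p m :: int
  assumes "\<forall>i. z (i + p) = z i"
  shows "z (j + p * m) = z j"
proof (cases "m \<ge> 0")
  case True
  then show ?thesis using per_nat[OF assms, of j "nat m"] by simp
next
  case False
  define k where "k = nat (- m)"
  have m: "m = - int k" using False k_def by simp
  have "z ((j + p * m) + p * int k) = z (j + p * m)" using per_nat[OF assms] by blast
  then show ?thesis using m by (simp add: algebra_simps)
qed

lemma per_cong:
  fixes z :: "int \<Rightarrow> 'b" and p :: int
  assumes "\<forall>i. z (i + p) = z i" "i mod p = j mod p"
  shows "z i = z j"
proof -
  have "z i = z (i mod p + p * (i div p))" by (metis add.commute mult.commute div_mult_mod_eq)
  also have "\<dots> = z (i mod p)" using per_int[OF assms(1)] by blast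
  also have "\<dots> = z (j mod p + p * (j div p))" using per_int[OF assms(1)] assms(2) by metis
  also have "\<dots> = z j" by (metis add.commute mult.commute div_mult_mod_eq)
  finally show ?thesis .
qed

lemma shift_zero:
  assumes "minimal_period z p" "\<forall>i. z (i + q) = z i"
  shows "q mod p = 0"
proof -
  have p: "p > 0" "\<forall>i. z (i + p) = z i" "\<forall>q. 0 < q \<and> q < p \<longrightarrow> \<not> (\<forall>i. z (i + q) = z i)"
    using assms(1) unfolding minimal_period_def by auto
  have "\<forall>i. z (i + q mod p) = z i"
  proof
    fix i
    have "(i + q mod p) mod p = (i + q) mod p" by (simp add: mod_add_right_eq)
    then have "z (i + q mod p) = z (i + q)" using per_cong[OF p(2)] by blast
    then show "z (i + q mod p) = z i" using assms(2) by simp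
  qed
  moreover have "0 \<le> q mod p" "q mod p < p" using p(1) by auto
  ultimately show ?thesis using p(3) by force
qed

lemma mod_uniq:
  fixes a b p :: int
  assumes "0 \<le> a" "a < p" "0 \<le> b" "b < p" "(a - b) mod p = 0"
  shows "a = b"
proof -
  have "a mod p = b mod p" using assms(5) by (simp add: mod_eq_dvd_iff mod_eq_0_iff_dvd)
  then show ?thesis using assms by simp
qed

lemma rev_uniq:
  assumes "minimal_period z p" "\<forall>i. z (k1 - i) = z (k2 - i)"
    "0 \<le> k1" "k1 < p" "0 \<le> k2" "k2 < p"
  shows "k1 = k2"
proof -
  have "\<forall>i. z (i + (k2 - k1)) = z i"
  proof
    fix i
    have "z (i + (k2 - k1)) = z (k2 - (k1 - i))" by (simp add: algebra_simps)
    also have "\<dots> = z (k1 - (k1 - i))" using assms(2) by metis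
    finally show "z (i + (k2 - k1)) = z i" by simp
  qed
  then have "(k2 - k1) mod p = 0" using shift_zero[OF assms(1)] by blast
  then show ?thesis using mod_uniq assms by metis
qed

lemma inv_shift:
  assumes "minimal_period z p" "\<forall>w. h (h w) = w" "\<forall>i. h (z i) = z (s + i)"
  shows "(s mod p = 0 \<or> 2 * (s mod p) = p) \<and> (\<forall>i. h (z i) = z (s mod p + i))"
proof -
  have p: "p > 0" "\<forall>i. z (i + p) = z i"
    using assms(1) unfolding minimal_period_def by auto
  have "\<forall>i. z (i + 2 * s) = z i"
  proof
    fix i
    have "z i = h (h (z i))" using assms(2) by simp
    also have "\<dots> = z (s + (s + i))" using assms(3) by simp
    finally show "z (i + 2 * s) = z i" by (simp add: algebra_simps)
  qed
  then have "(2 * s) mod p = 0" using shift_zero[OF assms(1)] by blast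
  then have d: "p dvd 2 * (s mod p)" by (metis mod_eq_0_iff_dvd mod_mult_right_eq)
  have r: "0 \<le> s mod p" "s mod p < p" using p(1) by auto
  from d obtain t where t: "2 * (s mod p) = p * t" by (auto elim: dvdE)
  have "p * t \<ge> 0" using t r by linarith
  then have "t \<ge> 0" using p(1) by (simp add: zero_le_mult_iff)
  moreover have "p * t < p * 2" using t r by linarith
  then have "t < 2" using p(1) by simp
  ultimately have "t = 0 \<or> t = 1" by auto
  then have A: "s mod p = 0 \<or> 2 * (s mod p) = p" using t by auto
  have "\<forall>i. h (z i) = z (s mod p + i)"
  proof
    fix i
    have "(s + i) mod p = (s mod p + i) mod p" by (simp add: mod_add_left_eq)
    then show "h (z i) = z (s mod p + i)" using assms(3) per_cong[OF p(2)] by metis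
  qed
  then show ?thesis using A by blast
qed

lemma fix_refl:
  assumes bsc: "bounds_strictly_convex_domain \<Gamma>" and bs: "billiard_sequence \<Gamma> z"
    and mp: "minimal_period z p" and p3: "p \<ge> 3" and nd: "cmod d = 1"
    and fx: "\<forall>i. d * cnj (z i) = z i"
  shows False
proof -
  have zi: "\<forall>i. z i \<in> \<Gamma> \<and> z i \<noteq> z (i + 1)" using bs unfolding billiard_sequence_def .
  have "\<forall>i. z (i + 2) = z i"
  proof (rule ccontr)
    assume "\<not> (\<forall>i. z (i + 2) = z i)"
    then obtain i where ne: "z (i + 2) \<noteq> z i" by blast
    have a: "z (i + 1) \<noteq> z (i + 2)" using zi[rule_format, of "i+1"] by (simp add: add.assoc)
    define u where "u = csqrt d"
    have u0: "u \<noteq> 0" using csqrt_nz[OF nd] u_def by simp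
    have fr: "\<And>k. z k = of_real (Re (z k / u)) * u" using fixed_real[OF nd] fx u_def by blast
    have m: "z i \<in> \<Gamma>" "z (i+1) \<in> \<Gamma>" "z (i+2) \<in> \<Gamma>" using zi by blast+
    have b: "z i \<noteq> z (i+1)" using zi by blast
    show False by (rule collinear3[OF bsc u0 m b a ne[symmetric] fr fr fr])
  qed
  moreover have "0 < (2::int) \<and> 2 < p" using p3 by simp
  ultimately show False using mp unfolding minimal_period_def by (metis add.commute)
qed

lemma zero_not:
  assumes bsc: "bounds_strictly_convex_domain \<Gamma>" and bs: "billiard_sequence \<Gamma> z"
    and sym: "\<forall>w\<in>\<Gamma>. - w \<in> \<Gamma>"
  shows "z j \<noteq> 0"
proof
  assume z0: "z j = 0"
  have zi: "\<forall>i. z i \<in> \<Gamma> \<and> z i \<noteq> z (i + 1)" using bs unfolding billiard_sequence_def .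
  define x where "x = z (j + 1)"
  have x1: "x \<in> \<Gamma>" using zi x_def by blast
  have x2: "x \<noteq> 0" using zi[rule_format, of j] z0 x_def by simp
  have x3: "- x \<in> \<Gamma>" using sym x1 by blast
  have x4: "(0::complex) \<in> \<Gamma>" using zi[rule_format, of j] z0 by simp
  have ne: "x \<noteq> 0" "0 \<noteq> - x" "x \<noteq> - x" using x2 by auto
  have eq: "x = of_real 1 * x" "0 = of_real 0 * x" "- x = of_real (-1) * x" by simp_all
  show False by (rule collinear3[OF bsc x2 x1 x4 x3 ne eq])
qed

theorem mainTheorem10:
  fixes n :: nat and \<Gamma> :: "complex set" and z :: "int \<Rightarrow> complex"
    and H :: "(complex \<Rightarrow> complex) set" and \<rho> \<sigma> :: "complex \<Rightarrow> complex" and p :: int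
  assumes "n \<ge> 1"
    and "symmetric_billiard_curve n \<Gamma>"
    and "\<rho> \<in> range (rotD n)" and "\<rho> \<noteq> id" and "\<rho> \<circ> \<rho> = id"
    and "\<sigma> \<in> range (reflD n)"
    and "H = gen_subgroup {\<rho>, \<sigma>}" and "card H = 4"
    and "billiard_sequence \<Gamma> z"
    and "minimal_period z p" and "p \<ge> 3"
    and "st_sym_group n z = H"
  shows "even p \<and>
    (let I = ((\<forall>i. \<rho> (z i) = z (p div 2 + i)) \<and>
              (\<exists>!k. 0 \<le> k \<and> k < p \<and> (\<forall>i. \<sigma> (z i) = z (k - i))));
         II = ((\<exists>k. 0 < k \<and> k < p \<and> odd k \<and> (\<forall>i. \<rho> (z i) = z (k - i)) \<and>
                  (\<forall>k'. 0 \<le> k' \<and> k' < p \<and> (\<forall>i. \<rho> (z i) = z (k' - i)) \<longrightarrow> k' = k)) \<and>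
               ((\<forall>i. \<sigma> (z i) = z (p div 2 + i)) \<or> (\<forall>i. (\<rho> \<circ> \<sigma>) (z i) = z (p div 2 + i))))
     in (I \<and> \<not> II) \<or> (II \<and> \<not> I))"
proof -
  note A = assms
  have bsc: "bounds_strictly_convex_domain \<Gamma>" and symG: "\<forall>g\<in>dihedral n. g ` \<Gamma> = \<Gamma>"
    using A(2) unfolding symmetric_billiard_curve_def by auto
  have bs: "billiard_sequence \<Gamma> z" using A(9) .
  have mp: "minimal_period z p" using A(10) .
  have p3: "p \<ge> 3" using A(11) .
  have pp: "p > 0" "\<forall>i. z (i + p) = z i" using mp unfolding minimal_period_def by auto
  obtain j where j: "\<rho> = rotD n j" using A(3) by blast
  define c where "c = cis (2 * pi * real_of_int j / real n)"
  have rc: "\<rho> = (\<lambda>w. c * w)" using j by (simp add: rotD_def c_def)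
  have "c * c = 1" using fun_cong[OF A(5), of 1] rc by simp
  moreover have "c \<noteq> 1" using A(4) rc by (auto simp: id_def)
  ultimately have "c = -1"
    by (metis (no_types, lifting) add.inverse_inverse mult_cancel_left2 mult_minus_left square_eq_1_iff)
  then have rho: "\<rho> = (\<lambda>w. - w)" using rc by simp
  obtain j' where j': "\<sigma> = reflD n j'" using A(6) by blast
  define d where "d = cis (2 * pi * real_of_int j' / real n)"
  have sig: "\<sigma> = (\<lambda>w. d * cnj w)" using j' by (simp add: reflD_def d_def)
  have nd: "cmod d = 1" "cmod (-d) = 1" by (simp_all add: d_def)
  have rs: "\<rho> \<circ> \<sigma> = (\<lambda>w. (-d) * cnj w)" using rho sig by auto
  have dd: "d * cnj d = 1" using complex_norm_square[of d] nd by simp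
  have invs: "\<forall>w. \<sigma> (\<sigma> w) = w" using sig dd by (simp add: mult.assoc[symmetric])
  have invrs: "\<forall>w. (\<rho> \<circ> \<sigma>) ((\<rho> \<circ> \<sigma>) w) = w" using rs dd by (simp add: mult.assoc[symmetric])
  have "\<rho> \<in> H" "\<sigma> \<in> H" "\<rho> \<circ> \<sigma> \<in> H" using A(7) unfolding gen_subgroup_def by auto
  then have "\<rho> \<in> st_sym_group n z" "\<sigma> \<in> st_sym_group n z" "\<rho> \<circ> \<sigma> \<in> st_sym_group n z"
    using A(12) by auto
  then have symr: "\<exists>k. (\<forall>i. \<rho> (z i) = z (k + i)) \<or> (\<forall>i. \<rho> (z i) = z (k - i))"
    and syms: "\<exists>k. (\<forall>i. \<sigma> (z i) = z (k + i)) \<or> (\<forall>i. \<sigma> (z i) = z (k - i))"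
    unfolding st_sym_group_def by auto
  have "\<rho> \<in> dihedral n" using A(3) unfolding dihedral_def by auto
  then have "\<rho> ` \<Gamma> = \<Gamma>" using symG by blast
  then have negG: "\<forall>w\<in>\<Gamma>. - w \<in> \<Gamma>" using rho by auto
  have Z: "\<And>i. z i \<noteq> 0" using zero_not[OF bsc bs negG] .
  have fixd: "\<not> (\<forall>i. \<sigma> (z i) = z i)" using fix_refl[OF bsc bs mp p3 nd(1)] sig by auto
  have fixrd: "\<not> (\<forall>i. (\<rho> \<circ> \<sigma>) (z i) = z i)" using fix_refl[OF bsc bs mp p3 nd(2)] rs by auto
  have rinj: "\<And>a b. \<rho> a = \<rho> b \<Longrightarrow> a = b" using rho by auto
  have invr: "\<forall>w. \<rho> (\<rho> w) = w" using rho by simp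
  show ?thesis
  proof (cases "\<exists>k. \<forall>i. \<rho> (z i) = z (k + i)")
    case True
    then obtain k where k: "\<forall>i. \<rho> (z i) = z (k + i)" by blast
    note ik = inv_shift[OF mp invr k]
    have "k mod p \<noteq> 0"
    proof
      assume "k mod p = 0"
      then have "\<rho> (z 0) = z 0" using ik by simp
      then show False using Z[of 0] rho by simp
    qed
    then have ev: "2 * (k mod p) = p" using ik by blast
    then have evp: "even p" by (metis dvd_triv_left)
    have kd: "k mod p = p div 2" using ev by linarith
    have I1: "\<forall>i. \<rho> (z i) = z (p div 2 + i)" using ik kd by simp
    have nos: "\<not> (\<forall>i. \<sigma> (z i) = z (p div 2 + i))"
    proof
      assume "\<forall>i. \<sigma> (z i) = z (p div 2 + i)"
      then have "\<forall>i. (\<rho> \<circ> \<sigma>) (z i) = z i" using I1 invr by (metis comp_apply)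
      then show False using fixrd by blast
    qed
    have nors: "\<not> (\<forall>i. (\<rho> \<circ> \<sigma>) (z i) = z (p div 2 + i))"
    proof
      assume "\<forall>i. (\<rho> \<circ> \<sigma>) (z i) = z (p div 2 + i)"
      then have "\<forall>i. \<sigma> (z i) = z i" using I1 rinj by (metis comp_apply)
      then show False using fixd by blast
    qed
    have nosh: "\<not> (\<exists>s. \<forall>i. \<sigma> (z i) = z (s + i))"
    proof
      assume "\<exists>s. \<forall>i. \<sigma> (z i) = z (s + i)"
      then obtain s where s: "\<forall>i. \<sigma> (z i) = z (s + i)" by blast
      note iss = inv_shift[OF mp invs s]
      show False
      proof (cases "s mod p = 0")
        case True then show False using iss fixd by simp
      next
        case False
        then have "s mod p = p div 2" using iss by linarith
        then show False using iss nos by simp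
      qed
    qed
    then obtain s where s: "\<forall>i. \<sigma> (z i) = z (s - i)" using syms by blast
    have s0: "\<forall>i. \<sigma> (z i) = z (s mod p - i)"
    proof
      fix i
      have "(s - i) mod p = (s mod p - i) mod p" by (simp add: mod_diff_left_eq)
      then show "\<sigma> (z i) = z (s mod p - i)" using s per_cong[OF pp(2)] by metis
    qed
    have I2: "\<exists>!k. 0 \<le> k \<and> k < p \<and> (\<forall>i. \<sigma> (z i) = z (k - i))"
    proof (rule ex1I[of _ "s mod p"])
      show "0 \<le> s mod p \<and> s mod p < p \<and> (\<forall>i. \<sigma> (z i) = z (s mod p - i))" using s0 pp(1) by auto
    next
      fix k' assume "0 \<le> k' \<and> k' < p \<and> (\<forall>i. \<sigma> (z i) = z (k' - i))"
      then have h: "0 \<le> k'" "k' < p" "\<forall>i. z (k' - i) = z (s mod p - i)" using s0 by auto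
      show "k' = s mod p" using rev_uniq[OF mp h(3) h(1) h(2)] pp(1) by simp
    qed
    have nII: "\<not> ((\<forall>i. \<sigma> (z i) = z (p div 2 + i)) \<or> (\<forall>i. (\<rho> \<circ> \<sigma>) (z i) = z (p div 2 + i)))"
      using nos nors by blast
    show ?thesis unfolding Let_def
      apply (rule conjI)
       apply (rule evp)
      apply (rule disjI1)
      apply (rule conjI)
      using I1 I2 apply blast
      using nII apply blast
      done
  next
    case False
    then obtain k where k: "\<forall>i. \<rho> (z i) = z (k - i)" using symr by blast
    have kodd: "odd k"
    proof
      assume "even k"
      then obtain m where "k = 2 * m" by blast
      then have "\<rho> (z m) = z m" using k by (metis mult_2 add_diff_cancel_right')
      then show False using Z[of m] rho by simp
    qed
    have P2: "even p \<and> ((\<forall>i. \<sigma> (z i) = z (p div 2 + i)) \<or> (\<forall>i. (\<rho> \<circ> \<sigma>) (z i) = z (p div 2 + i)))"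
    proof (cases "\<exists>s. \<forall>i. \<sigma> (z i) = z (s + i)")
      case True
      then obtain s where s: "\<forall>i. \<sigma> (z i) = z (s + i)" by blast
      note iss = inv_shift[OF mp invs s]
      have "s mod p \<noteq> 0" using iss fixd by auto
      then have e: "2 * (s mod p) = p" using iss by blast
      then have "s mod p = p div 2" by linarith
      moreover have "even p" using e by (metis dvd_triv_left)
      ultimately show ?thesis using iss by auto
    next
      case False
      then obtain s where s: "\<forall>i. \<sigma> (z i) = z (s - i)" using syms by blast
      have rsh: "\<forall>i. (\<rho> \<circ> \<sigma>) (z i) = z ((k - s) + i)"
      proof
        fix i
        have "(\<rho> \<circ> \<sigma>) (z i) = \<rho> (z (s - i))" using s by simp
        also have "\<dots> = z (k - (s - i))" using k by simp
        finally show "(\<rho> \<circ> \<sigma>) (z i) = z ((k - s) + i)" by (simp add: algebra_simps)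
      qed
      note iss = inv_shift[OF mp invrs rsh]
      have "(k - s) mod p \<noteq> 0" using iss fixrd by auto
      then have e: "2 * ((k - s) mod p) = p" using iss by blast
      then have "(k - s) mod p = p div 2" by linarith
      moreover have "even p" using e by (metis dvd_triv_left)
      ultimately show ?thesis using iss by auto
    qed
    then have evp: "even p" by blast
    have k0: "\<forall>i. \<rho> (z i) = z (k mod p - i)"
    proof
      fix i
      have "(k - i) mod p = (k mod p - i) mod p" by (simp add: mod_diff_left_eq)
      then show "\<rho> (z i) = z (k mod p - i)" using k per_cong[OF pp(2)] by metis
    qed
    have ko: "odd (k mod p)"
    proof -
      have e1: "k mod p = k - p * (k div p)" by (simp add: minus_mult_div_eq_mod)
      have "even (p * (k div p))" using evp by simp
      then show ?thesis using kodd e1 by simp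
    qed
    then have kpos: "0 < k mod p" using pp(1) by (metis even_zero le_less pos_mod_sign)
    have uq: "\<forall>k'. 0 \<le> k' \<and> k' < p \<and> (\<forall>i. \<rho> (z i) = z (k' - i)) \<longrightarrow> k' = k mod p"
    proof (intro allI impI)
      fix k' assume "0 \<le> k' \<and> k' < p \<and> (\<forall>i. \<rho> (z i) = z (k' - i))"
      then have h: "0 \<le> k'" "k' < p" "\<forall>i. z (k' - i) = z (k mod p - i)" using k0 by auto
      show "k' = k mod p" using rev_uniq[OF mp h(3) h(1) h(2)] pp(1) by simp
    qed
    have kl: "k mod p < p" using pp(1) by simp
    have II1: "\<exists>k. 0 < k \<and> k < p \<and> odd k \<and> (\<forall>i. \<rho> (z i) = z (k - i)) \<and>
                  (\<forall>k'. 0 \<le> k' \<and> k' < p \<and> (\<forall>i. \<rho> (z i) = z (k' - i)) \<longrightarrow> k' = k)"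
      using kpos kl ko k0 uq by blast
    have nI: "\<not> (\<forall>i. \<rho> (z i) = z (p div 2 + i))" using False by blast
    show ?thesis unfolding Let_def
      apply (rule conjI)
       apply (rule evp)
      apply (rule disjI2)
      apply (rule conjI)
      using P2 II1 apply blast
      using nI apply blast
      done
  qed
qed

end
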